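(* Let $n$ be a positive integer and let $l=n-1$. The $n\times n$ matrices $P_1,P_2,\dots,P_{(n-1)^2},C_1,C_2,\dots,C_n$ are linearly independent.
   Context: Numbering of positions: for an $l\times l$ matrix, the position $(i,j)$ is assigned the number $i+(j-i)l \pmod{l^2}$, taken in $\{1,\dots,l^2\}$ (residue $0$ is read as $l^2$). For each integer $1\le i\le l^2$, let $A_i\in M_l$ be the $(0,1)$-matrix whose entries are all $0$ except those in the positions numbered $i,i+1,\dots,i+l-2 \pmod{l^2}$, which are $1$ (so $A_i$ has at most one $1$ in each row and column, with one zero row and one zero column). For $1\le i\le (n-1)^2$, $P_i$ is the unique $n\times n$ permutation matrix such that deleting its first row and first column yields $A_i$. For $j\in[n]$, $C_j$ is the $n\times n$ $(0,1)$-matrix whose $j$-th column consists of all $1$'s and all other entries are $0$. *)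

theory Defs
  imports Complex_Main "HOL-Combinatorics.Permutations"
begin

text \<open>Matrices are represented as functions nat => nat => real with 1-based indices;
  an n x n matrix is intended to vanish outside {1..n} x {1..n}.\<close>

definition pos_num :: "nat \<Rightarrow> nat \<Rightarrow> nat \<Rightarrow> nat" where
  "pos_num l i j =
     (let r = nat ((int i + (int j - int i) * int l) mod int (l^2))
      in if r = 0 then l^2 else r)"

definition red_num :: "nat \<Rightarrow> nat \<Rightarrow> nat" where
  "red_num l k = (let r = k mod (l^2) in if r = 0 then l^2 else r)"

definition A_mat :: "nat \<Rightarrow> nat \<Rightarrow> nat \<Rightarrow> nat \<Rightarrow> real" where
  "A_mat l k i j =
     (if i \<in> {1..l} \<and> j \<in> {1..l} \<and>
         (\<exists>t. t + 2 \<le> l \<and> pos_num l i j = red_num l (k + t))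
      then 1 else 0)"

definition is_perm_matrix :: "nat \<Rightarrow> (nat \<Rightarrow> nat \<Rightarrow> real) \<Rightarrow> bool" where
  "is_perm_matrix n P \<longleftrightarrow>
     (\<exists>\<sigma>. \<sigma> permutes {1..n} \<and>
        (\<forall>i j. P i j = (if i \<in> {1..n} \<and> j \<in> {1..n} \<and> j = \<sigma> i then 1 else 0)))"

definition P_mat :: "nat \<Rightarrow> nat \<Rightarrow> nat \<Rightarrow> nat \<Rightarrow> real" where
  "P_mat n k = (THE P. is_perm_matrix n P \<and>
      (\<forall>i \<in> {1..n-1}. \<forall>j \<in> {1..n-1}. P (i+1) (j+1) = A_mat (n-1) k i j))"

definition C_mat :: "nat \<Rightarrow> nat \<Rightarrow> nat \<Rightarrow> nat \<Rightarrow> real" where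
  "C_mat n m i j = (if i \<in> {1..n} \<and> j = m then 1 else 0)"

end

theory Submission
  imports Defs
begin

lemma dvd_small: fixes d z :: int assumes "d dvd z" "\<bar>z\<bar> < d" shows "z = 0"
proof (rule ccontr)
  assume "z \<noteq> 0"
  hence "\<bar>d\<bar> \<le> \<bar>z\<bar>" using assms(1) dvd_imp_le_int by blast
  thus False using assms(2) by linarith
qed

definition NN :: "nat \<Rightarrow> nat \<Rightarrow> nat \<Rightarrow> int" where
  "NN l i j = int i + (int j - int i) * int l"

definition SS :: "nat \<Rightarrow> nat \<Rightarrow> (nat \<times> nat) set" where
  "SS l k = {(i,j). i \<in> {1..l} \<and> j \<in> {1..l} \<and>
     (\<exists>t. t + 2 \<le> l \<and> int (l^2) dvd (NN l i j - int (k+t)))}"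

lemma SS_sub: "SS l k \<subseteq> {1..l} \<times> {1..l}" by (auto simp: SS_def)

lemma NN_mod_l: "int l dvd (NN l i j - int i)"
  by (simp add: NN_def)

lemma row_unique:
  assumes "(i,j1) \<in> SS l k" "(i,j2) \<in> SS l k" shows "j1 = j2"
proof -
  obtain t1 where t1: "t1 + 2 \<le> l" "int (l^2) dvd (NN l i j1 - int (k+t1))" "j1 \<in> {1..l}"
    using assms(1) by (auto simp: SS_def)
  obtain t2 where t2: "t2 + 2 \<le> l" "int (l^2) dvd (NN l i j2 - int (k+t2))" "j2 \<in> {1..l}"
    using assms(2) by (auto simp: SS_def)
  have h1: "int (l^2) dvd (NN l i j1 - int (k+t1)) - (NN l i j2 - int (k+t2))"
    by (rule dvd_diff[OF t1(2) t2(2)])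
  have h2: "(NN l i j1 - int (k+t1)) - (NN l i j2 - int (k+t2)) = (int j1 - int j2) * int l - (int t1 - int t2)"
    by (simp add: NN_def algebra_simps)
  have d: "int l * int l dvd (int j1 - int j2) * int l - (int t1 - int t2)"
    using h1 unfolding h2 by (simp add: power2_eq_square)
  hence "int l dvd (int j1 - int j2) * int l - (int t1 - int t2)"
    using dvd_mult_left by blast
  moreover have "int l dvd (int j1 - int j2) * int l" by simp
  ultimately have "int l dvd (int j1 - int j2) * int l - ((int j1 - int j2) * int l - (int t1 - int t2))"
    using dvd_diff by blast
  hence "int l dvd (int t1 - int t2)" by simp
  hence "int t1 - int t2 = 0" using t1 t2 by (intro dvd_small) auto
  hence "int l * int l dvd (int j1 - int j2) * int l" using d by simp
  hence "int l dvd (int j1 - int j2)" using t1 by (simp add: mult.commute)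
  hence "int j1 - int j2 = 0" using t1 t2 by (intro dvd_small) auto
  thus ?thesis by simp
qed

lemma col_unique:
  assumes "(i1,j) \<in> SS l k" "(i2,j) \<in> SS l k" shows "i1 = i2"
proof -
  obtain t1 where t1: "t1 + 2 \<le> l" "int (l^2) dvd (NN l i1 j - int (k+t1))" "i1 \<in> {1..l}"
    using assms(1) by (auto simp: SS_def)
  obtain t2 where t2: "t2 + 2 \<le> l" "int (l^2) dvd (NN l i2 j - int (k+t2))" "i2 \<in> {1..l}"
    using assms(2) by (auto simp: SS_def)
  define \<delta> where "\<delta> = int i1 - int i2"
  define \<tau> where "\<tau> = int t1 - int t2"
  define L where "L = int l"
  have h1: "int (l^2) dvd (NN l i1 j - int (k+t1)) - (NN l i2 j - int (k+t2))"
    by (rule dvd_diff[OF t1(2) t2(2)])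
  have h2: "(NN l i1 j - int (k+t1)) - (NN l i2 j - int (k+t2)) = (\<delta> - \<tau>) - \<delta> * L"
    by (simp add: NN_def algebra_simps \<delta>_def \<tau>_def L_def)
  have d: "L * L dvd (\<delta> - \<tau>) - \<delta> * L"
    using h1 unfolding h2 by (simp add: power2_eq_square L_def)
  hence "L dvd (\<delta> - \<tau>) - \<delta> * L" using dvd_mult_left by blast
  moreover have "L dvd \<delta> * L" by simp
  ultimately have "L dvd ((\<delta> - \<tau>) - \<delta> * L) + \<delta> * L" using dvd_add by blast
  hence "L dvd (\<delta> - \<tau>)" by simp
  then obtain e where e: "\<delta> - \<tau> = L * e" by (auto elim: dvdE)
  have bd: "\<bar>\<delta>\<bar> < L" "\<bar>\<tau>\<bar> \<le> L - 2" using t1 t2 by (auto simp: \<delta>_def \<tau>_def L_def)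
  have "\<bar>L * e\<bar> < 2 * L" using bd e by linarith
  moreover have "L > 0" using bd by linarith
  ultimately have "\<bar>e\<bar> < 2" using mult_less_cancel_left_pos[of L "\<bar>e\<bar>" 2] by (simp add: abs_mult)
  have "(\<delta> - \<tau>) - \<delta> * L = L * (e - \<tau>) - (L * L) * e"
  proof -
    have "\<delta> = \<tau> + L * e" using e by simp
    thus ?thesis by (simp add: algebra_simps)
  qed
  hence "L * L dvd L * (e - \<tau>) - (L * L) * e" using d by simp
  moreover have "L * L dvd (L * L) * e" by simp
  ultimately have "L * L dvd (L * (e - \<tau>) - (L * L) * e) + (L * L) * e" using dvd_add by blast
  hence "L * L dvd L * (e - \<tau>)" by simp
  hence "L dvd (e - \<tau>)" using bd by (auto simp: L_def)
  moreover have "\<bar>e - \<tau>\<bar> < L" using bd \<open>\<bar>e\<bar> < 2\<close> by linarith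
  ultimately have "e = \<tau>" using dvd_small by fastforce
  hence "\<delta> = e * (L + 1)" using e by (simp add: algebra_simps)
  hence "\<bar>e\<bar> * (L + 1) < L" using bd by (simp add: abs_mult)
  moreover have "e \<noteq> 0 \<Longrightarrow> 1 * (L + 1) \<le> \<bar>e\<bar> * (L + 1)"
    using bd by (intro mult_right_mono) auto
  ultimately have "e = 0" by fastforce
  thus ?thesis using \<open>\<delta> = e * (L + 1)\<close> by (simp add: \<delta>_def)
qed

lemma surjN:
  assumes "l \<ge> 1"
  shows "\<exists>i\<in>{1..l}. \<exists>j\<in>{1..l}. int (l^2) dvd (NN l i j - x)"
proof -
  define L where "L = int l"
  have L0: "L > 0" using assms by (simp add: L_def)
  define i where "i = nat ((x - 1) mod L) + 1"
  have ii: "int i = (x - 1) mod L + 1" using L0 by (simp add: i_def)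
  have "0 \<le> (x - 1) mod L" "(x - 1) mod L < L" using L0 by simp_all
  hence irange: "i \<in> {1..l}" using ii unfolding L_def by auto
  have "(x-1) - (x-1) mod L = L * ((x-1) div L)" by (simp add: minus_mod_eq_mult_div)
  hence "x - int i = L * ((x-1) div L)" using ii by simp
  hence "L dvd (x - int i)" by simp
  then obtain m where m: "x - int i = L * m" by (auto elim: dvdE)
  define j where "j = nat ((int i + m - 1) mod L) + 1"
  have jj: "int j = (int i + m - 1) mod L + 1" using L0 by (simp add: j_def)
  have "0 \<le> (int i + m - 1) mod L" "(int i + m - 1) mod L < L" using L0 by simp_all
  hence jrange: "j \<in> {1..l}" using jj unfolding L_def by auto
  have "(int i + m - 1) - (int i + m - 1) mod L = L * ((int i + m - 1) div L)" by (simp add: minus_mod_eq_mult_div)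
  hence "int j - int i - m = L * (- ((int i + m - 1) div L))" using jj by simp
  hence "L dvd (int j - int i - m)" by (metis dvd_triv_left)
  then obtain q where q: "int j - int i - m = L * q" by (auto elim: dvdE)
  have "NN l i j - x = (int j - int i - m) * L"
    using m by (simp add: NN_def L_def algebra_simps)
  also have "\<dots> = L * L * q" using q by simp
  finally have "int (l^2) dvd (NN l i j - x)" by (simp add: L_def power2_eq_square)
  thus ?thesis using irange jrange by blast
qed

lemma fstSS:
  assumes "l \<ge> 1"
  shows "fst ` SS l k = {i \<in> {1..l}. \<exists>t. t + 2 \<le> l \<and> int l dvd (int i - int (k+t))}"
proof
  show "fst ` SS l k \<subseteq> {i \<in> {1..l}. \<exists>t. t + 2 \<le> l \<and> int l dvd (int i - int (k+t))}"
  proof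
    fix i assume "i \<in> fst ` SS l k"
    then obtain j t where ij: "i \<in> {1..l}" "t + 2 \<le> l" "int (l^2) dvd (NN l i j - int (k+t))"
      by (auto simp: SS_def)
    have "int l dvd int (l^2)" by (simp add: power2_eq_square)
    hence "int l dvd (NN l i j - int (k+t))" using ij(3) dvd_trans by blast
    hence "int l dvd (NN l i j - int (k+t)) - (NN l i j - int i)" using NN_mod_l dvd_diff by blast
    hence "int l dvd (int i - int t - int k)" by simp
    hence "int l dvd (int i - int (k+t))" by (simp add: algebra_simps)
    thus "i \<in> {i \<in> {1..l}. \<exists>t. t + 2 \<le> l \<and> int l dvd (int i - int (k+t))}" using ij by blast
  qed
next
  show "{i \<in> {1..l}. \<exists>t. t + 2 \<le> l \<and> int l dvd (int i - int (k+t))} \<subseteq> fst ` SS l k"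
  proof
    fix i assume "i \<in> {i \<in> {1..l}. \<exists>t. t + 2 \<le> l \<and> int l dvd (int i - int (k+t))}"
    then obtain t where it: "i \<in> {1..l}" "t + 2 \<le> l" "int l dvd (int i - int (k+t))" by blast
    obtain i' j' where ij': "i' \<in> {1..l}" "j' \<in> {1..l}" "int (l^2) dvd (NN l i' j' - int (k+t))"
      using surjN[OF assms, of "int (k+t)"] by blast
    have "int l dvd int (l^2)" by (simp add: power2_eq_square)
    hence h3: "int l dvd (NN l i' j' - int (k+t))" using ij'(3) dvd_trans by blast
    have "int l dvd (NN l i' j' - int (k+t)) - (NN l i' j' - int i') - (int i - int (k+t))"
      by (rule dvd_diff[OF dvd_diff[OF h3 NN_mod_l[of l i' j']] it(3)])
    hence "int l dvd (int i' - int i)" by (simp add: algebra_simps)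
    hence "int i' - int i = 0" using it ij' by (intro dvd_small) auto
    hence "(i, j') \<in> SS l k" using it ij' by (auto simp: SS_def)
    thus "i \<in> fst ` SS l k" by force
  qed
qed

lemma rowsSS:
  assumes "l \<ge> 1"
  shows "\<exists>r0. {1..l} - fst ` SS l k = {r0}"
proof -
  define L where "L = int l"
  have L0: "L > 0" using assms by (simp add: L_def)
  define r0 where "r0 = nat ((int k - 2) mod L) + 1"
  have rr: "int r0 = (int k - 2) mod L + 1" using L0 by (simp add: r0_def)
  have "0 \<le> (int k - 2) mod L" "(int k - 2) mod L < L" using L0 by simp_all
  hence rrange: "r0 \<in> {1..l}" using rr unfolding L_def by auto
  have "(int k - 2) - (int k - 2) mod L = L * ((int k - 2) div L)" by (simp add: minus_mod_eq_mult_div)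
  hence "int r0 - int k + 1 = L * (- ((int k - 2) div L))" using rr by simp
  hence rk: "L dvd (int r0 - int k + 1)" by (metis dvd_triv_left)
  have "{1..l} - fst ` SS l k = {r0}"
  proof (intro equalityI subsetI)
    fix i assume i: "i \<in> {1..l} - fst ` SS l k"
    define t0 where "t0 = (int i - int k) mod L"
    have t0r: "0 \<le> t0" "t0 < L" using L0 by (auto simp: t0_def)
    have t0d: "L dvd (int i - int k - t0)" unfolding t0_def
      by (simp add: mod_eq_dvd_iff)
    show "i \<in> {r0}"
    proof (cases "t0 + 2 \<le> L")
      case True
      have eq: "int i - int (k + nat t0) = int i - int k - t0" using t0r by simp
      have d: "int l dvd (int i - int (k + nat t0))" using t0d unfolding eq L_def .
      have nt: "int (nat t0) = t0" using t0r by simp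
      have tt: "nat t0 + 2 \<le> l" using True nt unfolding L_def by linarith
      have "i \<in> {1..l}" using i by blast
      hence "i \<in> {i \<in> {1..l}. \<exists>t. t + 2 \<le> l \<and> int l dvd (int i - int (k+t))}" using d tt by blast
      hence "i \<in> fst ` SS l k" using fstSS[OF assms] by simp
      thus ?thesis using i by blast
    next
      case False
      hence "t0 = L - 1" using t0r by simp
      hence "L dvd (int i - int k - (L - 1))" using t0d by simp
      hence h4: "L dvd (int i - int k - (L - 1)) + L" using dvd_add dvd_refl by blast
      have eq4: "(int i - int k - (L - 1)) + L = int i - int k + 1" by simp
      have "L dvd (int i - int k + 1)" using h4 unfolding eq4 .
      hence "L dvd (int i - int k + 1) - (int r0 - int k + 1)" using rk dvd_diff by blast
      hence "L dvd (int i - int r0)" by simp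
      hence "int i - int r0 = 0" using i rrange by (intro dvd_small) (auto simp: L_def)
      thus ?thesis by simp
    qed
  next
    fix i assume "i \<in> {r0}"
    hence i: "i = r0" by simp
    have "r0 \<notin> fst ` SS l k"
    proof
      assume "r0 \<in> fst ` SS l k"
      hence "r0 \<in> {i \<in> {1..l}. \<exists>t. t + 2 \<le> l \<and> int l dvd (int i - int (k+t))}" using fstSS[OF assms] by simp
      then obtain t where t: "t + 2 \<le> l" "L dvd (int r0 - int (k+t))" unfolding L_def by blast
      hence "L dvd (int r0 - int k + 1) - (int r0 - int (k+t))" using rk dvd_diff by blast
      hence "L dvd (int t + 1)" by (simp add: add.commute)
      hence "int t + 1 = 0" using t by (intro dvd_small) (auto simp: L_def)
      thus False by simp
    qed
    thus "i \<in> {1..l} - fst ` SS l k" using i rrange by blast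
  qed
  thus ?thesis by blast
qed

lemma cardSS:
  assumes "l \<ge> 1"
  shows "\<exists>r0 c0. {1..l} - fst ` SS l k = {r0} \<and> {1..l} - snd ` SS l k = {c0}"
proof -
  obtain r0 where r0: "{1..l} - fst ` SS l k = {r0}" using rowsSS[OF assms] by blast
  have sub1: "fst ` SS l k \<subseteq> {1..l}" and sub2: "snd ` SS l k \<subseteq> {1..l}" using SS_sub by force+
  have fin: "finite (SS l k)" by (rule finite_subset[OF SS_sub]) simp
  have "card ({1..l} - fst ` SS l k) = l - card (fst ` SS l k)"
    using sub1 by (simp add: card_Diff_subset finite_subset)
  hence c1: "card (fst ` SS l k) = l - 1" using r0 sub1 card_mono[OF _ sub1] by simp
  have "inj_on fst (SS l k)" by (auto simp: inj_on_def intro: row_unique)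
  hence "card (SS l k) = l - 1" using c1 card_image by metis
  moreover have "inj_on snd (SS l k)" by (auto simp: inj_on_def intro: col_unique)
  ultimately have c2: "card (snd ` SS l k) = l - 1" using card_image by metis
  have "card ({1..l} - snd ` SS l k) = l - card (snd ` SS l k)"
    using sub2 by (simp add: card_Diff_subset finite_subset)
  hence "card ({1..l} - snd ` SS l k) = 1" using c2 assms by simp
  then obtain c0 where "{1..l} - snd ` SS l k = {c0}" using card_1_singletonE by blast
  thus ?thesis using r0 by blast
qed

lemma wrap_inj:
  fixes a b M :: nat assumes "a < M" "b < M"
  shows "((if a = 0 then M else a) = (if b = 0 then M else b)) \<longleftrightarrow> a = b"
  using assms by auto

lemma pos_red_iff:
  assumes "l \<ge> 1"
  shows "pos_num l i j = red_num l x \<longleftrightarrow> int (l^2) dvd (NN l i j - int x)"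
proof -
  define M where "M = l^2"
  have M0: "M > 0" using assms by (simp add: M_def)
  have a: "nat (NN l i j mod int M) < M" using M0
    by (simp add: nat_less_iff)
  have b: "x mod M < M" using M0 by simp
  have "pos_num l i j = red_num l x \<longleftrightarrow> nat (NN l i j mod int M) = x mod M"
    unfolding pos_num_def red_num_def Let_def NN_def[symmetric] M_def[symmetric]
    using wrap_inj[OF a b] by simp
  also have "\<dots> \<longleftrightarrow> NN l i j mod int M = int x mod int M"
    using M0 by (metis int_nat_eq nat_int of_nat_mod pos_mod_sign of_nat_0_less_iff)
  also have "\<dots> \<longleftrightarrow> int M dvd (NN l i j - int x)" by (simp add: mod_eq_dvd_iff)
  finally show ?thesis by (simp add: M_def)
qed

lemma A_iff:
  assumes "l \<ge> 1"
  shows "A_mat l k i j = (if (i,j) \<in> SS l k then 1 else 0)"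
  unfolding A_mat_def SS_def using pos_red_iff[OF assms] by auto

lemma ext_perm:
  fixes S :: "(nat \<times> nat) set"
  assumes sub: "S \<subseteq> {1..l} \<times> {1..l}"
    and ru0: "\<forall>i j1 j2. (i,j1) \<in> S \<longrightarrow> (i,j2) \<in> S \<longrightarrow> j1 = j2"
    and cu0: "\<forall>i1 i2 j. (i1,j) \<in> S \<longrightarrow> (i2,j) \<in> S \<longrightarrow> i1 = i2"
    and r0: "{1..l} - fst ` S = {r0}"
    and c0: "{1..l} - snd ` S = {c0}"
  shows "\<exists>\<sigma>. \<sigma> permutes {1..l+1} \<and> \<sigma> 1 \<noteq> 1 \<and>
           (\<forall>i\<in>{1..l}. \<forall>j\<in>{1..l}. \<sigma> (i+1) = j+1 \<longleftrightarrow> (i,j) \<in> S)"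
proof -
  have ru: "j1 = j2" if "(i,j1) \<in> S" "(i,j2) \<in> S" for i j1 j2 using ru0 that by blast
  have cu: "i1 = i2" if "(i1,j) \<in> S" "(i2,j) \<in> S" for i1 i2 j using cu0 that by blast
  define f where "f i = (THE j. (i,j) \<in> S)" for i
  have f2: "f i = j" if hij: "(i,j) \<in> S" for i j
    unfolding f_def
  proof (rule the_equality)
    show "(i,j) \<in> S" by (rule hij)
  next
    fix j' assume "(i,j') \<in> S"
    thus "j' = j" using ru[OF _ hij] by blast
  qed
  have f1: "(i, f i) \<in> S" if hi: "i \<in> fst ` S" for i
  proof -
    obtain j where hj: "(i,j) \<in> S" using hi by force
    show ?thesis using hj f2[OF hj] by simp
  qed
  have fr: "f i \<in> {1..l}" if hi: "i \<in> fst ` S" for i using f1[OF hi] sub by blast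
  define \<sigma> where "\<sigma> i = (if i = 1 then c0 + 1 else if 2 \<le> i \<and> i \<le> l+1 then
        (if i - 1 \<in> fst ` S then f (i-1) + 1 else 1) else i)" for i
  have c0r: "c0 \<in> {1..l}" "c0 \<notin> snd ` S" using c0 by auto
  have r0r: "r0 \<in> {1..l}" "r0 \<notin> fst ` S" using r0 by auto
  have img: "\<sigma> ` {1..l+1} \<subseteq> {1..l+1}"
  proof
    fix y assume "y \<in> \<sigma> ` {1..l+1}"
    then obtain i where i: "i \<in> {1..l+1}" "y = \<sigma> i" by blast
    show "y \<in> {1..l+1}"
    proof (cases "i = 1")
      case True thus ?thesis using i c0r by (simp add: \<sigma>_def)
    next
      case False
      show ?thesis
      proof (cases "i - 1 \<in> fst ` S")
        case True
        hence "(i-1, f (i-1)) \<in> S" using f1 by blast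
        hence "f (i-1) \<in> {1..l}" using sub by blast
        thus ?thesis using i False True by (simp add: \<sigma>_def)
      next
        case False2: False
        thus ?thesis using i False by (simp add: \<sigma>_def)
      qed
    qed
  qed
  have inj: "inj_on \<sigma> {1..l+1}"
  proof (rule inj_onI)
    fix x y assume x: "x \<in> {1..l+1}" and y: "y \<in> {1..l+1}" and e: "\<sigma> x = \<sigma> y"
    have val: "\<sigma> i = (if i = 1 then c0 + 1 else if i - 1 \<in> fst ` S then f (i-1) + 1 else 1)"
      if "i \<in> {1..l+1}" for i using that by (simp add: \<sigma>_def)
    have case1: "i - 1 = r0" if "i \<in> {1..l+1}" "i \<noteq> 1" "i - 1 \<notin> fst ` S" for i
    proof -
      have "i - 1 \<in> {1..l} - fst ` S" using that by auto
      thus ?thesis using r0 by blast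
    qed
    show "x = y"
    proof (cases "x = 1")
      case True
      show ?thesis
      proof (rule ccontr)
        assume "x \<noteq> y"
        hence "y \<noteq> 1" using True by simp
        show False
        proof (cases "y - 1 \<in> fst ` S")
          case True2: True
          hence "(y-1, f (y-1)) \<in> S" using f1 by blast
          moreover have "f (y-1) = c0" using e val[OF x] val[OF y] True True2 \<open>y \<noteq> 1\<close> by simp
          ultimately show False using c0r by force
        next
          case False
          thus False using e val[OF x] val[OF y] True \<open>y \<noteq> 1\<close> c0r by simp
        qed
      qed
    next
      case xn1: False
      show ?thesis
      proof (cases "y = 1")
        case True
        show ?thesis
        proof (cases "x - 1 \<in> fst ` S")
          case True2: True
          hence "(x-1, f (x-1)) \<in> S" using f1 by blast
          moreover have "f (x-1) = c0" using e val[OF x] val[OF y] True True2 xn1 by simp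
          ultimately show ?thesis using c0r by force
        next
          case False
          thus ?thesis using e val[OF x] val[OF y] True xn1 c0r by simp
        qed
      next
        case yn1: False
        show ?thesis
        proof (cases "x - 1 \<in> fst ` S")
          case xin: True
          show ?thesis
          proof (cases "y - 1 \<in> fst ` S")
            case yin: True
            have "f (x-1) = f (y-1)" using e val[OF x] val[OF y] xin yin xn1 yn1 by simp
            hence "x - 1 = y - 1" using f1[OF xin] f1[OF yin] cu by metis
            thus ?thesis using xn1 yn1 x y by simp
          next
            case False
            thus ?thesis using e val[OF x] val[OF y] xin xn1 yn1 fr[OF xin] by simp
          qed
        next
          case xout: False
          show ?thesis
          proof (cases "y - 1 \<in> fst ` S")
            case yin: True
            thus ?thesis using e val[OF x] val[OF y] xout xn1 yn1 fr[OF yin] by simp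
          next
            case False
            hence "y - 1 = r0" "x - 1 = r0" using case1 x y xn1 yn1 xout by auto
            thus ?thesis using xn1 yn1 x y by simp
          qed
        qed
      qed
    qed
  qed
  have "\<sigma> ` {1..l+1} = {1..l+1}" using endo_inj_surj[OF _ img inj] by simp
  hence bij: "bij_betw \<sigma> {1..l+1} {1..l+1}" using inj by (simp add: bij_betw_def)
  have perm: "\<sigma> permutes {1..l+1}"
    by (rule bij_imp_permutes[OF bij]) (auto simp: \<sigma>_def)
  have s1: "\<sigma> 1 \<noteq> 1" using c0r by (simp add: \<sigma>_def)
  have blk: "\<forall>i\<in>{1..l}. \<forall>j\<in>{1..l}. \<sigma> (i+1) = j+1 \<longleftrightarrow> (i,j) \<in> S"
  proof (intro ballI)
    fix i j assume i: "i \<in> {1..l}" and j: "j \<in> {1..l}"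
    show "\<sigma> (i+1) = j+1 \<longleftrightarrow> (i,j) \<in> S"
    proof (cases "i \<in> fst ` S")
      case True
      hence e1: "\<sigma> (i+1) = f i + 1" using i by (simp add: \<sigma>_def)
      show ?thesis
      proof
        assume "\<sigma> (i+1) = j+1"
        hence "f i = j" using e1 by simp
        thus "(i,j) \<in> S" using f1[OF True] by simp
      next
        assume "(i,j) \<in> S"
        hence "f i = j" by (rule f2)
        thus "\<sigma> (i+1) = j+1" using e1 by simp
      qed
    next
      case False
      hence e1: "\<sigma> (i+1) = 1" using i by (simp add: \<sigma>_def)
      have "(i,j) \<notin> S" using False by force
      thus ?thesis using e1 j by simp
    qed
  qed
  show ?thesis using perm s1 blk by blast
qed

lemma perm_unique:
  assumes P: "is_perm_matrix n P" and Q: "is_perm_matrix n Q"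
    and blk: "\<forall>i\<in>{1..n-1}. \<forall>j\<in>{1..n-1}. P (i+1) (j+1) = Q (i+1) (j+1)"
  shows "P = Q"
proof -
  obtain \<sigma> where \<sigma>: "\<sigma> permutes {1..n}"
    "\<And>i j. P i j = (if i \<in> {1..n} \<and> j \<in> {1..n} \<and> j = \<sigma> i then 1 else 0)"
    using P unfolding is_perm_matrix_def by blast
  obtain \<tau> where \<tau>: "\<tau> permutes {1..n}"
    "\<And>i j. Q i j = (if i \<in> {1..n} \<and> j \<in> {1..n} \<and> j = \<tau> i then 1 else 0)"
    using Q unfolding is_perm_matrix_def by blast
  have sr: "\<sigma> i \<in> {1..n}" "\<tau> i \<in> {1..n}" if hi: "i \<in> {1..n}" for i
    using permutes_in_image[OF \<sigma>(1), of i] permutes_in_image[OF \<tau>(1), of i] hi by blast+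
  have a: "\<sigma> i = \<tau> i" if i: "i \<in> {2..n}" for i
  proof -
    have i1: "i \<in> {1..n}" using i by auto
    have c: "ss i = tt i" if h2: "2 \<le> ss i"
      and hP: "\<And>i j. PP i j = (if i \<in> {1..n} \<and> j \<in> {1..n} \<and> j = ss i then 1 else 0)"
      and hQ: "\<And>i j. QQ i j = (if i \<in> {1..n} \<and> j \<in> {1..n} \<and> j = tt i then 1 else 0)"
      and bl: "\<forall>i\<in>{1..n-1}. \<forall>j\<in>{1..n-1}. PP (i+1) (j+1) = QQ (i+1) (j+1)"
      and sri: "ss i \<in> {1..n}" for ss tt :: "nat \<Rightarrow> nat" and PP QQ :: "nat \<Rightarrow> nat \<Rightarrow> real"
    proof -
      have m1: "i - 1 \<in> {1..n-1}" using i by auto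
      have m2: "ss i - 1 \<in> {1..n-1}" using sri h2 by auto
      have "PP ((i-1)+1) ((ss i - 1)+1) = QQ ((i-1)+1) ((ss i - 1)+1)"
        using bl[rule_format, OF m1 m2] .
      moreover have "i - 1 + 1 = i" "ss i - 1 + 1 = ss i" using i h2 by auto
      ultimately have "PP i (ss i) = QQ i (ss i)" by simp
      moreover have "PP i (ss i) = 1" using hP[of i "ss i"] i1 sri by simp
      ultimately have "QQ i (ss i) = 1" by simp
      thus ?thesis using hQ[of i "ss i"] by (simp split: if_splits)
    qed
    show ?thesis
    proof (cases "2 \<le> \<sigma> i")
      case True show ?thesis using c[where ss=\<sigma> and tt=\<tau> and PP=P and QQ=Q, OF True \<sigma>(2) \<tau>(2) blk sr(1)[OF i1]] .
    next
      case False
      show ?thesis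
      proof (cases "2 \<le> \<tau> i")
        case True
        have blk': "\<forall>i\<in>{1..n-1}. \<forall>j\<in>{1..n-1}. Q (i+1) (j+1) = P (i+1) (j+1)"
        proof (intro ballI)
          fix i' j' assume "i' \<in> {1..n-1}" "j' \<in> {1..n-1}"
          thus "Q (i'+1) (j'+1) = P (i'+1) (j'+1)" using blk by metis
        qed
        have "\<tau> i = \<sigma> i" using c[where ss=\<tau> and tt=\<sigma> and PP=Q and QQ=P, OF True \<tau>(2) \<sigma>(2) blk' sr(2)[OF i1]] .
        thus ?thesis by simp
      next
        case False2: False
        thus ?thesis using False sr[OF i1] by simp
      qed
    qed
  qed
  have b: "\<sigma> 1 = \<tau> 1"
  proof (rule ccontr)
    assume ne: "\<sigma> 1 \<noteq> \<tau> 1"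
    show False
    proof (cases "n \<ge> 1")
      case True
      hence "\<sigma> 1 \<in> {1..n}" using sr by simp
      hence "\<sigma> 1 \<in> \<tau> ` {1..n}" using permutes_image[OF \<tau>(1)] by simp
      then obtain x where x: "x \<in> {1..n}" "\<sigma> 1 = \<tau> x" by blast
      have "x \<noteq> 1" using x ne by auto
      hence "x \<in> {2..n}" using x by auto
      hence "\<sigma> 1 = \<sigma> x" using a x by simp
      hence "x = 1" using permutes_inj[OF \<sigma>(1)] by (metis injD)
      thus False using \<open>x \<noteq> 1\<close> by simp
    next
      case False
      thus False using ne permutes_not_in[OF \<sigma>(1)] permutes_not_in[OF \<tau>(1)] by simp
    qed
  qed
  have eqs: "\<sigma> i = \<tau> i" if hi: "i \<in> {1..n}" for i
  proof (cases "i = 1")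
    case True thus ?thesis using b by simp
  next
    case False hence "i \<in> {2..n}" using hi by auto
    thus ?thesis using a by blast
  qed
  show ?thesis
  proof (intro ext)
    fix i j
    show "P i j = Q i j"
    proof (cases "i \<in> {1..n}")
      case True thus ?thesis using eqs[OF True] by (simp only: \<sigma>(2) \<tau>(2))
    next
      case False thus ?thesis unfolding \<sigma>(2) \<tau>(2) by auto
    qed
  qed
qed

lemma P_char:
  assumes "n \<ge> 2"
  shows "\<exists>\<sigma>. \<sigma> permutes {1..n} \<and> \<sigma> 1 \<noteq> 1 \<and>
     P_mat n k = (\<lambda>i j. if i \<in> {1..n} \<and> j \<in> {1..n} \<and> j = \<sigma> i then 1 else 0) \<and>
     (\<forall>i\<in>{1..n-1}. \<forall>j\<in>{1..n-1}. P_mat n k (i+1) (j+1) = A_mat (n-1) k i j)"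
proof -
  define l where "l = n - 1"
  have l1: "l \<ge> 1" and nl: "n = l + 1" using assms by (auto simp: l_def)
  obtain r0 c0 where rc: "{1..l} - fst ` SS l k = {r0}" "{1..l} - snd ` SS l k = {c0}"
    using cardSS[OF l1] by blast
  obtain \<sigma> where \<sigma>: "\<sigma> permutes {1..l+1}" "\<sigma> 1 \<noteq> 1"
    "\<forall>i\<in>{1..l}. \<forall>j\<in>{1..l}. \<sigma> (i+1) = j+1 \<longleftrightarrow> (i,j) \<in> SS l k"
  proof -
    have ru: "\<forall>i j1 j2. (i,j1) \<in> SS l k \<longrightarrow> (i,j2) \<in> SS l k \<longrightarrow> j1 = j2" using row_unique by blast
    have cu: "\<forall>i1 i2 j. (i1,j) \<in> SS l k \<longrightarrow> (i2,j) \<in> SS l k \<longrightarrow> i1 = i2" using col_unique by blast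
    show ?thesis using ext_perm[OF SS_sub ru cu rc] that by blast
  qed
  define P0 where "P0 = (\<lambda>i j. if i \<in> {1..n} \<and> j \<in> {1..n} \<and> j = \<sigma> i then 1 else (0::real))"
  have pm: "is_perm_matrix n P0" unfolding is_perm_matrix_def P0_def using \<sigma>(1) nl by auto
  have bl: "\<forall>i\<in>{1..n-1}. \<forall>j\<in>{1..n-1}. P0 (i+1) (j+1) = A_mat (n-1) k i j"
  proof (intro ballI)
    fix i j assume i: "i \<in> {1..n-1}" and j: "j \<in> {1..n-1}"
    have "P0 (i+1) (j+1) = (if \<sigma> (i+1) = j+1 then 1 else 0)" using i j nl by (auto simp: P0_def)
    also have "\<dots> = (if (i,j) \<in> SS l k then 1 else 0)" using \<sigma>(3) i j by (simp add: l_def)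
    also have "\<dots> = A_mat (n-1) k i j" using A_iff[OF l1] by (simp add: l_def)
    finally show "P0 (i+1) (j+1) = A_mat (n-1) k i j" .
  qed
  have PP: "P_mat n k = P0"
    unfolding P_mat_def
  proof (rule the_equality)
    show "is_perm_matrix n P0 \<and> (\<forall>i\<in>{1..n-1}. \<forall>j\<in>{1..n-1}. P0 (i+1) (j+1) = A_mat (n-1) k i j)"
      using pm bl by blast
  next
    fix P assume "is_perm_matrix n P \<and> (\<forall>i\<in>{1..n-1}. \<forall>j\<in>{1..n-1}. P (i+1) (j+1) = A_mat (n-1) k i j)"
    hence hP: "is_perm_matrix n P" and hb: "\<forall>i\<in>{1..n-1}. \<forall>j\<in>{1..n-1}. P (i+1) (j+1) = A_mat (n-1) k i j" by auto
    have "\<forall>i\<in>{1..n-1}. \<forall>j\<in>{1..n-1}. P (i+1) (j+1) = P0 (i+1) (j+1)"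
    proof (intro ballI)
      fix i j assume ij: "i \<in> {1..n-1}" "j \<in> {1..n-1}"
      show "P (i+1) (j+1) = P0 (i+1) (j+1)" using hb[rule_format, OF ij] bl[rule_format, OF ij] by simp
    qed
    thus "P = P0" using perm_unique[OF hP pm] by blast
  qed
  show ?thesis
  proof (intro exI[of _ \<sigma>] conjI)
    show "\<sigma> permutes {1..n}" using \<sigma>(1) nl by simp
    show "\<sigma> 1 \<noteq> 1" by (rule \<sigma>(2))
    show "P_mat n k = (\<lambda>i j. if i \<in> {1..n} \<and> j \<in> {1..n} \<and> j = \<sigma> i then 1 else 0)"
      using PP unfolding P0_def .
    show "\<forall>i\<in>{1..n-1}. \<forall>j\<in>{1..n-1}. P_mat n k (i+1) (j+1) = A_mat (n-1) k i j"
      using bl unfolding PP .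
  qed
qed

lemma per_mult:
  fixes \<alpha> :: "int \<Rightarrow> real"
  assumes per: "\<And>y. \<alpha> (y + d) = \<alpha> y"
  shows "\<alpha> (y + c * d) = \<alpha> y"
proof -
  have nat_case: "\<alpha> (y + int c' * d) = \<alpha> y" for c' :: nat and y
  proof (induction c' arbitrary: y)
    case 0 thus ?case by simp
  next
    case (Suc c')
    have "\<alpha> (y + int (Suc c') * d) = \<alpha> ((y + int c' * d) + d)" by (simp add: algebra_simps)
    also have "\<dots> = \<alpha> (y + int c' * d)" by (rule per)
    finally show ?case using Suc by simp
  qed
  show ?thesis
  proof (cases "c \<ge> 0")
    case True
    then obtain c' where "c = int c'" using nonneg_int_cases by blast
    thus ?thesis using nat_case by simp
  next
    case False
    define c' where "c' = nat (- c)"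
    have c': "c = - int c'" using False by (simp add: c'_def)
    have "\<alpha> ((y + c * d) + int c' * d) = \<alpha> (y + c * d)" by (rule nat_case)
    thus ?thesis using c' by (simp add: algebra_simps)
  qed
qed

lemma alpha_zero:
  fixes \<alpha> :: "int \<Rightarrow> real" and m :: nat and L :: int
  assumes per: "\<And>y. \<alpha> (y + L) = \<alpha> y"
    and W: "\<And>y. (\<Sum>t<m. \<alpha> (y - int t)) = 0"
    and m1: "m \<ge> 1" and cop: "coprime (int m) L"
  shows "\<alpha> y = 0"
proof -
  have step: "\<alpha> y = \<alpha> (y - int m)" for y
  proof -
    define g where "g t = \<alpha> (y - int t)" for t
    have "sum g {..<Suc m} = g 0 + (\<Sum>t<m. g (Suc t))" by (rule sum.lessThan_Suc_shift)
    moreover have "sum g {..<Suc m} = sum g {..<m} + g m" by simp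
    moreover have "sum g {..<m} = 0" using W[of y] by (simp add: g_def)
    moreover have "(\<Sum>t<m. g (Suc t)) = 0" using W[of "y - 1"] by (simp add: g_def algebra_simps)
    ultimately have "g 0 = g m" by simp
    thus ?thesis by (simp add: g_def)
  qed
  have perm: "\<alpha> (y + int m) = \<alpha> y" for y using step[of "y + int m"] by simp
  obtain u v where uv: "u * int m + v * L = gcd (int m) L" using bezout_int by blast
  hence uv1: "u * int m + v * L = 1" using cop by simp
  have per1: "\<alpha> (y + 1) = \<alpha> y" for y
  proof -
    have "y + 1 = (y + v * L) + u * int m" using uv1 by linarith
    hence "\<alpha> (y + 1) = \<alpha> ((y + v * L) + u * int m)" by (rule arg_cong)
    also have "\<dots> = \<alpha> (y + v * L)" by (rule per_mult[where \<alpha>=\<alpha> and d="int m", OF perm])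
    also have "\<dots> = \<alpha> y" by (rule per_mult[where \<alpha>=\<alpha> and d=L, OF per])
    finally show ?thesis .
  qed
  have const: "\<alpha> z = \<alpha> 0" for z using per_mult[where \<alpha>=\<alpha> and d=1, OF per1, of 0 z] by simp
  have "(\<Sum>t<m. \<alpha> (0 - int t)) = (\<Sum>t<m. \<alpha> 0)" by (rule sum.cong[OF refl], rule const)
  hence "real m * \<alpha> 0 = 0" using W[of 0] by simp
  hence "\<alpha> 0 = 0" using m1 by simp
  thus ?thesis using const by simp
qed

lemma dvd_small2: fixes d z :: int assumes "d dvd z" "\<bar>z\<bar> < d" shows "z = 0"
proof (rule ccontr)
  assume "z \<noteq> 0"
  hence "\<bar>d\<bar> \<le> \<bar>z\<bar>" using assms(1) dvd_imp_le_int by blast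
  thus False using assms(2) by linarith
qed

definition redi :: "nat \<Rightarrow> int \<Rightarrow> int" where
  "redi L y = (if y mod int L = 0 then int L else y mod int L)"

lemma redi_props:
  assumes "L > 0"
  shows "1 \<le> redi L y" "redi L y \<le> int L" "int L dvd (y - redi L y)"
proof -
  have "0 \<le> y mod int L" "y mod int L < int L" using assms by simp_all
  thus "1 \<le> redi L y" "redi L y \<le> int L" unfolding redi_def by auto
  show "int L dvd (y - redi L y)"
  proof (cases "y mod int L = 0")
    case True
    hence "int L dvd y" by (simp add: dvd_eq_mod_eq_0)
    hence "int L dvd y - int L" by simp
    thus ?thesis using True by (simp add: redi_def)
  next
    case False
    have "int L dvd (y - y mod int L)" by (simp add: minus_mod_eq_mult_div)
    thus ?thesis using False by (simp add: redi_def)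
  qed
qed

lemma redi_unique:
  assumes "L > 0" "k \<in> {1..L}"
  shows "int L dvd (y - int k) \<longleftrightarrow> k = nat (redi L y)"
proof
  assume d: "int L dvd (y - int k)"
  have r: "1 \<le> redi L y" "redi L y \<le> int L" "int L dvd (y - redi L y)" using redi_props[OF assms(1)] by auto
  have "int L dvd (y - redi L y) - (y - int k)" using d r(3) dvd_diff by blast
  hence "int L dvd (int k - redi L y)" by simp
  moreover have "\<bar>int k - redi L y\<bar> < int L" using r assms(2) by auto
  ultimately have "int k - redi L y = 0" by (rule dvd_small2)
  thus "k = nat (redi L y)" by simp
next
  assume "k = nat (redi L y)"
  hence "int k = redi L y" using redi_props(1)[OF assms(1), of y] by simp
  thus "int L dvd (y - int k)" using redi_props(3)[OF assms(1)] by simp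
qed

lemma sum_pick:
  fixes a :: "nat \<Rightarrow> real"
  assumes "L > 0"
  shows "(\<Sum>k\<in>{1..L}. a k * (if int L dvd (y - int k) then 1 else 0)) = a (nat (redi L y))"
proof -
  have k0: "nat (redi L y) \<in> {1..L}" using redi_props[OF assms, of y] by auto
  have "(\<Sum>k\<in>{1..L}. a k * (if int L dvd (y - int k) then 1 else 0))
      = (\<Sum>k\<in>{1..L}. if k = nat (redi L y) then a k else 0)"
    by (rule sum.cong[OF refl]) (simp add: redi_unique[OF assms])
  also have "\<dots> = a (nat (redi L y))" using k0 by (simp add: sum.delta)
  finally show ?thesis .
qed

lemma W_eq:
  fixes a :: "nat \<Rightarrow> real" and L m :: nat and x :: int
  assumes L0: "L > 0" and mL: "m \<le> L"
  shows "(\<Sum>k\<in>{1..L}. a k * (if \<exists>t. t < m \<and> int L dvd (x - int (k+t)) then 1 else 0))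
       = (\<Sum>t<m. a (nat (redi L (x - int t))))"
proof -
  have A: "(if \<exists>t. t < m \<and> int L dvd (x - int (k+t)) then 1 else 0)
        = (\<Sum>t<m. (if int L dvd (x - int (k+t)) then 1 else 0::real))" for k
  proof (cases "\<exists>t. t < m \<and> int L dvd (x - int (k+t))")
    case True
    then obtain t0 where t0: "t0 < m" "int L dvd (x - int (k+t0))" by blast
    have u: "int L dvd (x - int (k+t)) \<longleftrightarrow> t = t0" if "t < m" for t
    proof
      assume d: "int L dvd (x - int (k+t))"
      have "int L dvd (x - int (k+t)) - (x - int (k+t0))" using d t0(2) dvd_diff by blast
      hence "int L dvd (int t0 - int t)" by simp
      moreover have "\<bar>int t0 - int t\<bar> < int L" using that t0(1) mL by auto
      ultimately have "int t0 - int t = 0" by (rule dvd_small2)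
      thus "t = t0" by simp
    next
      assume "t = t0" thus "int L dvd (x - int (k+t))" using t0 by simp
    qed
    have "(\<Sum>t<m. (if int L dvd (x - int (k+t)) then 1 else 0::real)) = (\<Sum>t<m. if t = t0 then 1 else 0)"
    proof (rule sum.cong[OF refl])
      fix t assume "t \<in> {..<m}"
      hence "int L dvd (x - int (k+t)) \<longleftrightarrow> t = t0" using u by simp
      thus "(if int L dvd (x - int (k+t)) then 1 else 0::real) = (if t = t0 then 1 else 0)" by simp
    qed
    also have "\<dots> = 1" using t0(1) by (simp add: sum.delta)
    finally show ?thesis using True by simp
  next
    case False
    hence "(\<Sum>t<m. (if int L dvd (x - int (k+t)) then 1 else 0::real)) = 0"
      by (intro sum.neutral) auto
    thus ?thesis using False by simp
  qed
  have "(\<Sum>k\<in>{1..L}. a k * (if \<exists>t. t < m \<and> int L dvd (x - int (k+t)) then 1 else 0))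
      = (\<Sum>k\<in>{1..L}. \<Sum>t<m. a k * (if int L dvd (x - int (k+t)) then 1 else 0))"
  proof (rule sum.cong[OF refl])
    fix k
    show "a k * (if \<exists>t. t < m \<and> int L dvd (x - int (k+t)) then 1 else 0)
        = (\<Sum>t<m. a k * (if int L dvd (x - int (k+t)) then 1 else 0))"
      unfolding A[of k] by (rule sum_distrib_left)
  qed
  also have "\<dots> = (\<Sum>t<m. \<Sum>k\<in>{1..L}. a k * (if int L dvd (x - int (k+t)) then 1 else 0))"
    by (rule sum.swap)
  also have "\<dots> = (\<Sum>t<m. \<Sum>k\<in>{1..L}. a k * (if int L dvd ((x - int t) - int k) then 1 else 0))"
    by (rule sum.cong[OF refl], rule sum.cong[OF refl]) (simp add: algebra_simps)
  also have "\<dots> = (\<Sum>t<m. a (nat (redi L (x - int t))))"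
    by (rule sum.cong[OF refl]) (rule sum_pick[OF L0])
  finally show ?thesis .
qed

theorem mainTheorem5:
  fixes n :: nat
  assumes "n \<ge> 1"
  shows "\<forall>(a :: nat \<Rightarrow> real) (b :: nat \<Rightarrow> real).
           (\<forall>i \<in> {1..n}. \<forall>j \<in> {1..n}.
              (\<Sum>k = 1..(n-1)^2. a k * P_mat n k i j) + (\<Sum>m = 1..n. b m * C_mat n m i j) = 0)
           \<longrightarrow> (\<forall>k \<in> {1..(n-1)^2}. a k = 0) \<and> (\<forall>m \<in> {1..n}. b m = 0)"
proof (intro allI impI)
  fix a b :: "nat \<Rightarrow> real"
  assume H: "\<forall>i \<in> {1..n}. \<forall>j \<in> {1..n}.
              (\<Sum>k = 1..(n-1)^2. a k * P_mat n k i j) + (\<Sum>m = 1..n. b m * C_mat n m i j) = 0"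
  show "(\<forall>k \<in> {1..(n-1)^2}. a k = 0) \<and> (\<forall>m \<in> {1..n}. b m = 0)"
  proof (cases "n = 1")
    case True
    have "(\<Sum>k = 1..(n-1)^2. a k * P_mat n k 1 1) + (\<Sum>m = 1..n. b m * C_mat n m 1 1) = 0"
      using H True by simp
    hence "b 1 = 0" using True by (simp add: C_mat_def)
    thus ?thesis using True by simp
  next
    case False
    hence n2: "n \<ge> 2" using assms by simp
    define l where "l = n - 1"
    have l1: "l \<ge> 1" and nl: "n = l + 1" using n2 by (auto simp: l_def)
    define L where "L = l^2"
    have L0: "L > 0" using l1 by (simp add: L_def)
    have nL: "(n-1)^2 = L" by (simp add: L_def l_def)
    have "\<forall>k. \<exists>\<sigma>. \<sigma> permutes {1..n} \<and> \<sigma> 1 \<noteq> 1 \<and>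
      P_mat n k = (\<lambda>i j. if i \<in> {1..n} \<and> j \<in> {1..n} \<and> j = \<sigma> i then 1 else 0) \<and>
      (\<forall>i\<in>{1..n-1}. \<forall>j\<in>{1..n-1}. P_mat n k (i+1) (j+1) = A_mat (n-1) k i j)"
      using P_char[OF n2] by blast
    from choice[OF this] obtain s where s0: "\<forall>k. s k permutes {1..n} \<and> s k 1 \<noteq> 1 \<and>
      P_mat n k = (\<lambda>i j. if i \<in> {1..n} \<and> j \<in> {1..n} \<and> j = s k i then 1 else 0) \<and>
      (\<forall>i\<in>{1..n-1}. \<forall>j\<in>{1..n-1}. P_mat n k (i+1) (j+1) = A_mat (n-1) k i j)"
      by blast
    have s: "s k permutes {1..n} \<and> s k 1 \<noteq> 1 \<and>
      P_mat n k = (\<lambda>i j. if i \<in> {1..n} \<and> j \<in> {1..n} \<and> j = s k i then 1 else 0) \<and>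
      (\<forall>i\<in>{1..n-1}. \<forall>j\<in>{1..n-1}. P_mat n k (i+1) (j+1) = A_mat (n-1) k i j)" for k
      using spec[OF s0, of k] .
    have sp: "s k permutes {1..n}" for k using s by blast
    have s1: "s k 1 \<noteq> 1" for k using s by blast
    have Pk: "P_mat n k i j = (if i \<in> {1..n} \<and> j \<in> {1..n} \<and> j = s k i then 1 else 0)" for k i j
      using s[of k] by simp
    have Pblk: "P_mat n k (i+1) (j+1) = A_mat l k i j" if "i \<in> {1..l}" "j \<in> {1..l}" for k i j
    proof -
      have bl: "\<forall>i\<in>{1..n-1}. \<forall>j\<in>{1..n-1}. P_mat n k (i+1) (j+1) = A_mat (n-1) k i j"
        using s[of k] by blast
      have "i \<in> {1..n-1}" "j \<in> {1..n-1}" using that by (simp_all add: l_def)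
      thus ?thesis using bl unfolding l_def by blast
    qed
    have colP: "(\<Sum>i=1..n. P_mat n k i j) = 1" if j: "j \<in> {1..n}" for k j
    proof -
      define g where "g x = (if x = j then 1 else 0::real)" for x
      have "(\<Sum>i=1..n. P_mat n k i j) = (\<Sum>i\<in>{1..n}. (g \<circ> s k) i)"
      proof (rule sum.cong[OF refl])
        fix i assume i: "i \<in> {1..n}"
        show "P_mat n k i j = (g \<circ> s k) i" unfolding Pk g_def comp_def using i j by auto
      qed
      also have "\<dots> = sum g {1..n}" using sum.permute[OF sp[of k], of g] by simp
      also have "\<dots> = 1" using j by (simp add: g_def sum.delta)
      finally show ?thesis .
    qed
    have colC: "(\<Sum>i=1..n. C_mat n m i j) = (if m = j then real n else 0)" for m j
    proof (cases "m = j")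
      case True
      have "(\<Sum>i=1..n. C_mat n m i j) = (\<Sum>i=1..n. 1::real)"
        by (rule sum.cong[OF refl]) (use True in \<open>auto simp: C_mat_def\<close>)
      thus ?thesis using True by simp
    next
      case False
      have "(\<Sum>i=1..n. C_mat n m i j) = (\<Sum>i=1..n. 0::real)"
        by (rule sum.cong[OF refl]) (use False in \<open>auto simp: C_mat_def\<close>)
      thus ?thesis using False by simp
    qed
    have cs: "(\<Sum>k=1..L. a k) + b j * real n = 0" if j: "j \<in> {1..n}" for j
    proof -
      have "(\<Sum>i=1..n. (\<Sum>k=1..L. a k * P_mat n k i j) + (\<Sum>m=1..n. b m * C_mat n m i j)) = (\<Sum>i=1..n. 0::real)"
        by (rule sum.cong[OF refl]) (use H j nL in auto)
      hence "0 = (\<Sum>i=1..n. (\<Sum>k=1..L. a k * P_mat n k i j)) + (\<Sum>i=1..n. (\<Sum>m=1..n. b m * C_mat n m i j))"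
        by (simp add: sum.distrib)
      also have "(\<Sum>i=1..n. (\<Sum>k=1..L. a k * P_mat n k i j)) = (\<Sum>k=1..L. \<Sum>i=1..n. a k * P_mat n k i j)"
        by (rule sum.swap)
      also have "\<dots> = (\<Sum>k=1..L. a k)"
      proof (rule sum.cong[OF refl])
        fix k
        have "(\<Sum>i=1..n. a k * P_mat n k i j) = a k * (\<Sum>i=1..n. P_mat n k i j)" by (rule sum_distrib_left[symmetric])
        thus "(\<Sum>i=1..n. a k * P_mat n k i j) = a k" using colP[OF j, of k] by simp
      qed
      also have "(\<Sum>i=1..n. (\<Sum>m=1..n. b m * C_mat n m i j)) = (\<Sum>m=1..n. \<Sum>i=1..n. b m * C_mat n m i j)"
        by (rule sum.swap)
      also have "\<dots> = (\<Sum>m=1..n. b m * (if m = j then real n else 0))"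
      proof (rule sum.cong[OF refl])
        fix m
        have "(\<Sum>i=1..n. b m * C_mat n m i j) = b m * (\<Sum>i=1..n. C_mat n m i j)" by (rule sum_distrib_left[symmetric])
        thus "(\<Sum>i=1..n. b m * C_mat n m i j) = b m * (if m = j then real n else 0)" using colC[of m j] by simp
      qed
      also have "\<dots> = b j * real n" using j by (simp add: sum.delta if_distrib cong: if_cong)
      finally show ?thesis by simp
    qed
    have b1: "b 1 = 0"
    proof -
      have h11: "(\<Sum>k = 1..L. a k * P_mat n k 1 1) + (\<Sum>m = 1..n. b m * C_mat n m 1 1) = 0"
        using H n2 nL by auto
      have "(\<Sum>k = 1..L. a k * P_mat n k 1 1) = 0"
      proof (rule sum.neutral, intro ballI)
        fix k
        show "a k * P_mat n k 1 1 = 0" using s1[of k] not_sym[OF s1[of k]] by (simp add: Pk)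
      qed
      moreover have "(\<Sum>m = 1..n. b m * C_mat n m 1 1) = (\<Sum>m = 1..n. if m = 1 then b m else 0)"
        by (rule sum.cong[OF refl]) (auto simp: C_mat_def)
      moreover have "\<dots> = b 1" using n2 by (simp add: sum.delta)
      ultimately show ?thesis using h11 by simp
    qed
    have sa: "(\<Sum>k=1..L. a k) = 0" using cs[of 1] b1 n2 by simp
    have bz: "\<forall>m\<in>{1..n}. b m = 0"
    proof
      fix m assume m: "m \<in> {1..n}"
      have "b m * real n = 0" using cs[OF m] sa by simp
      thus "b m = 0" using n2 by simp
    qed
    have H': "(\<Sum>k = 1..L. a k * P_mat n k i j) = 0" if "i \<in> {1..n}" "j \<in> {1..n}" for i j
    proof -
      have "(\<Sum>m = 1..n. b m * C_mat n m i j) = 0" by (rule sum.neutral) (simp add: bz)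
      moreover have "(\<Sum>k = 1..(n-1)^2. a k * P_mat n k i j) + (\<Sum>m = 1..n. b m * C_mat n m i j) = 0"
        using H that by blast
      ultimately show ?thesis using nL by simp
    qed
    have az: "\<forall>k\<in>{1..L}. a k = 0"
    proof (cases "l = 1")
      case True
      hence L1: "L = 1" and n2': "n = 2" using nl by (auto simp: L_def)
      have "s 1 1 \<in> {1..n}" using permutes_in_image[OF sp[of 1], of 1] n2 by simp
      hence "s 1 1 = 2" using s1[of 1] n2' by auto
      hence "P_mat n 1 1 2 = 1" using n2' Pk[of 1 1 2] by simp
      moreover have "(\<Sum>k = 1..L. a k * P_mat n k 1 2) = 0" using H' n2' by simp
      ultimately have "a 1 = 0" using L1 by simp
      thus ?thesis using L1 by simp
    next
      case False
      hence l2: "l \<ge> 2" using l1 by simp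
      have lower: "(\<Sum>k = 1..L. a k * (if (i,j) \<in> SS l k then 1 else 0)) = 0"
        if ij: "i \<in> {1..l}" "j \<in> {1..l}" for i j
      proof -
        have "(\<Sum>k = 1..L. a k * P_mat n k (i+1) (j+1)) = 0" using H' ij nl by simp
        moreover have "P_mat n k (i+1) (j+1) = (if (i,j) \<in> SS l k then 1 else 0)" for k
          using Pblk[OF ij] A_iff[OF l1] by simp
        ultimately show ?thesis by simp
      qed
      have Wx: "(\<Sum>k\<in>{1..L}. a k * (if \<exists>t. t < l - 1 \<and> int L dvd (x - int (k+t)) then 1 else 0)) = 0" for x
      proof -
        obtain i j where ij: "i \<in> {1..l}" "j \<in> {1..l}" "int (l^2) dvd (NN l i j - x)"
          using surjN[OF l1, of x] by blast
        have eqv: "(i,j) \<in> SS l k \<longleftrightarrow> (\<exists>t. t < l - 1 \<and> int L dvd (x - int (k+t)))" for k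
        proof -
          have d: "int L dvd (NN l i j - int (k+t)) \<longleftrightarrow> int L dvd (x - int (k+t))" for t
          proof
            assume "int L dvd (NN l i j - int (k+t))"
            hence "int L dvd (NN l i j - int (k+t)) - (NN l i j - x)" using ij(3) dvd_diff unfolding L_def by blast
            moreover have "(NN l i j - int (k+t)) - (NN l i j - x) = x - int (k+t)" by simp
            ultimately show "int L dvd (x - int (k+t))" by metis
          next
            assume "int L dvd (x - int (k+t))"
            hence "int L dvd (x - int (k+t)) + (NN l i j - x)" using ij(3) dvd_add unfolding L_def by blast
            moreover have "(x - int (k+t)) + (NN l i j - x) = NN l i j - int (k+t)" by simp
            ultimately show "int L dvd (NN l i j - int (k+t))" by metis
          qed
          have "(i,j) \<in> SS l k \<longleftrightarrow> (\<exists>t. t + 2 \<le> l \<and> int L dvd (NN l i j - int (k+t)))"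
            using ij by (simp add: SS_def L_def)
          also have "\<dots> \<longleftrightarrow> (\<exists>t. t < l - 1 \<and> int L dvd (x - int (k+t)))"
          proof -
            have "t + 2 \<le> l \<longleftrightarrow> t < l - 1" for t by arith
            thus ?thesis using d by simp
          qed
          finally show ?thesis .
        qed
        have "(\<Sum>k\<in>{1..L}. a k * (if \<exists>t. t < l - 1 \<and> int L dvd (x - int (k+t)) then 1 else 0))
            = (\<Sum>k = 1..L. a k * (if (i,j) \<in> SS l k then 1 else 0))"
          by (rule sum.cong[OF refl]) (simp add: eqv)
        also have "\<dots> = 0" by (rule lower[OF ij(1,2)])
        finally show ?thesis .
      qed
      define \<alpha> where "\<alpha> y = a (nat (redi L y))" for y
      have ll: "l * 1 \<le> l * l" using l1 by (intro mult_le_mono2) simp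
      have mL: "l - 1 \<le> L" unfolding L_def power2_eq_square using ll by linarith
      have W: "(\<Sum>t<l-1. \<alpha> (y - int t)) = 0" for y
        using W_eq[OF L0 mL, of a y] Wx[of y] by (simp add: \<alpha>_def)
      have per: "\<alpha> (y + int L) = \<alpha> y" for y
        by (simp add: \<alpha>_def redi_def)
      have cop: "coprime (int (l - 1)) (int L)"
      proof -
        have "coprime (l - 1) l" using l1 coprime_Suc_right_nat[of "l-1"] by simp
        hence "coprime (l - 1) L" by (simp add: L_def coprime_power_right_iff)
        thus ?thesis by (simp add: coprime_int_iff)
      qed
      have az: "\<alpha> y = 0" for y
        by (rule alpha_zero[of \<alpha> "int L" "l - 1"]) (use per W l2 cop in auto)
      show ?thesis
      proof
        fix k assume k: "k \<in> {1..L}"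
        have "k = nat (redi L (int k))" using redi_unique[OF L0 k, of "int k"] by simp
        hence "a k = \<alpha> (int k)" by (simp add: \<alpha>_def)
        thus "a k = 0" using az by simp
      qed
    qed
    show ?thesis using az bz nL by simp
  qed
qed

end
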